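(* Let $G$ be a connected graph on vertex set $[n]=\{1,\dots,n\}$ and let $\pi$ be a permutation of $[n]$. If $C_1$ and $C_2$ are two distinct cycles of $\pi$ that are mutually routable in 2 steps, then $|C_1|=|C_2|$.
   Context: Routing via matchings: each vertex $i$ of $G$ initially holds a pebble, and the pebble initially on vertex $i$ must be moved to vertex $\pi(i)$. A step consists of choosing a matching of $G$ and swapping the pebbles at the two endpoints of every matched edge. A cycle of $\pi$ is identified with its set of vertices. Two cycles $C_1,C_2$ of $\pi$ are mutually routable in 2 steps if the pebbles initially on $C_1\cup C_2$ can all be brought to their destinations in at most 2 steps using only edges of $G$ with one endpoint in $C_1$ and the other in $C_2$. *)

theory Defs
  imports "HOL-Combinatorics.Permutations"
begin

definition simple_graph_on :: "nat \<Rightarrow> (nat \<Rightarrow> nat \<Rightarrow> bool) \<Rightarrow> bool" where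
  "simple_graph_on n E \<longleftrightarrow>
     (\<forall>u v. E u v \<longrightarrow> E v u) \<and> (\<forall>u. \<not> E u u) \<and>
     (\<forall>u v. E u v \<longrightarrow> u \<in> {1..n} \<and> v \<in> {1..n})"

definition connected_graph_on :: "nat \<Rightarrow> (nat \<Rightarrow> nat \<Rightarrow> bool) \<Rightarrow> bool" where
  "connected_graph_on n E \<longleftrightarrow> (\<forall>u\<in>{1..n}. \<forall>v\<in>{1..n}. E\<^sup>*\<^sup>* u v)"

definition is_matching :: "(nat \<Rightarrow> nat \<Rightarrow> bool) \<Rightarrow> nat set set \<Rightarrow> bool" where
  "is_matching E M \<longleftrightarrow>
     (\<forall>e\<in>M. \<exists>u v. e = {u, v} \<and> u \<noteq> v \<and> E u v) \<and>
     (\<forall>e\<in>M. \<forall>f\<in>M. e \<noteq> f \<longrightarrow> e \<inter> f = {})"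

text \<open>A configuration c maps each vertex to the pebble currently on it.
  A step along matching M swaps the pebbles at the endpoints of every matched edge.\<close>
definition swap_step :: "nat set set \<Rightarrow> (nat \<Rightarrow> nat) \<Rightarrow> (nat \<Rightarrow> nat)" where
  "swap_step M c v =
     (if \<exists>u. u \<noteq> v \<and> {u, v} \<in> M then c (THE u. u \<noteq> v \<and> {u, v} \<in> M) else c v)"

definition run_steps :: "nat set set list \<Rightarrow> (nat \<Rightarrow> nat)" where
  "run_steps Ms = foldl (\<lambda>c M. swap_step M c) id Ms"

definition cycle_of :: "(nat \<Rightarrow> nat) \<Rightarrow> nat \<Rightarrow> nat set" where
  "cycle_of \<pi> i = {(\<pi> ^^ k) i | k. True}"

definition perm_cycles :: "nat \<Rightarrow> (nat \<Rightarrow> nat) \<Rightarrow> nat set set" where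
  "perm_cycles n \<pi> = cycle_of \<pi> ` {1..n}"

text \<open>C1, C2 mutually routable in 2 steps: at most 2 matchings, using only edges
  of E between C1 and C2, bring every pebble initially on v \<in> C1 \<union> C2 to \<pi> v.\<close>
definition mutually_routable_2 ::
  "(nat \<Rightarrow> nat \<Rightarrow> bool) \<Rightarrow> (nat \<Rightarrow> nat) \<Rightarrow> nat set \<Rightarrow> nat set \<Rightarrow> bool" where
  "mutually_routable_2 E \<pi> C1 C2 \<longleftrightarrow>
     (\<exists>Ms. length Ms \<le> 2 \<and>
        (\<forall>M\<in>set Ms. is_matching E M \<and> (\<forall>e\<in>M. \<exists>u\<in>C1. \<exists>v\<in>C2. e = {u, v})) \<and>
        (\<forall>i\<in>C1 \<union> C2. run_steps Ms (\<pi> i) = i))"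

end

theory Submission
  imports Defs "HOL-Combinatorics.Cycles"
begin

definition pp :: "nat set set \<Rightarrow> nat \<Rightarrow> nat" where
  "pp M v = (if \<exists>u. u \<noteq> v \<and> {u, v} \<in> M then (THE u. u \<noteq> v \<and> {u, v} \<in> M) else v)"

lemma pp_unique:
  assumes "is_matching E M" "u \<noteq> v" "{u,v} \<in> M"
  shows "pp M v = u"
proof -
  have "\<And>w. w \<noteq> v \<and> {w,v} \<in> M \<Longrightarrow> w = u"
  proof -
    fix w assume w: "w \<noteq> v \<and> {w,v} \<in> M"
    show "w = u"
    proof (rule ccontr)
      assume "w \<noteq> u"
      have "w \<in> {w,v}" by simp
      moreover have "w \<notin> {u,v}" using \<open>w \<noteq> u\<close> w by simp
      ultimately have "{w,v} \<noteq> {u,v}" by metis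
      moreover have dj: "\<forall>e\<in>M. \<forall>f\<in>M. e \<noteq> f \<longrightarrow> e \<inter> f = {}"
        using assms(1) by (simp add: is_matching_def)
      ultimately have "{w,v} \<inter> {u,v} = {}" using w assms(3) by simp
      thus False by auto
    qed
  qed
  hence "(THE w. w \<noteq> v \<and> {w,v} \<in> M) = u" using assms(2,3) by (intro the_equality) blast+
  thus ?thesis using assms unfolding pp_def by auto
qed

lemma pp_cases:
  assumes "is_matching E M"
  shows "pp M v = v \<or> (pp M v \<noteq> v \<and> {pp M v, v} \<in> M)"
proof (cases "\<exists>u. u \<noteq> v \<and> {u, v} \<in> M")
  case True
  then obtain u where u: "u \<noteq> v" "{u, v} \<in> M" by blast
  then have "pp M v = u" using pp_unique[OF assms] by blast
  then show ?thesis using u by auto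
qed (auto simp add: pp_def)

lemma pp_invol:
  assumes "is_matching E M"
  shows "pp M (pp M v) = v"
proof -
  from pp_cases[OF assms, of v] show ?thesis
  proof
    assume "pp M v = v" then show ?thesis by simp
  next
    assume h: "pp M v \<noteq> v \<and> {pp M v, v} \<in> M"
    then have "{v, pp M v} \<in> M" by (simp add: insert_commute)
    then show ?thesis using pp_unique[OF assms] h by metis
  qed
qed

lemma swap_step_pp:
  assumes "is_matching E M"
  shows "swap_step M c v = c (pp M v)"
  unfolding swap_step_def pp_def by auto

lemma pp_empty: "pp {} v = v" by (simp add: pp_def)

lemma pp_cross:
  assumes "is_matching E M" "\<forall>e\<in>M. \<exists>u\<in>C. \<exists>v\<in>D. e = {u, v}"
    "C \<inter> D = {}" "x \<in> C"
  shows "pp M x = x \<or> pp M x \<in> D"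
proof (cases "pp M x = x")
  case False
  then have h: "{pp M x, x} \<in> M" using pp_cases[OF assms(1), of x] by blast
  have "\<exists>u\<in>C. \<exists>v\<in>D. {pp M x, x} = {u, v}" using assms(2) h by blast
  then obtain u v where uv: "u \<in> C" "v \<in> D" "{pp M x, x} = {u,v}" by blast
  have "x \<notin> D" using assms(3,4) by blast
  moreover have "x \<in> {u,v}" using uv(3) by (metis insertI1 insertI2)
  ultimately have xu: "x = u" using uv(2) by blast
  have "pp M x \<in> {u,v}" using uv(3) by (metis insertI1)
  then have "pp M x = v" using xu False by simp
  then show ?thesis using uv(2) by simp
qed simp

lemma core:
  assumes mA: "is_matching E A" and mB: "is_matching E B"
    and cA: "\<forall>e\<in>A. \<exists>u\<in>C. \<exists>v\<in>D. e = {u, v}"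
    and cB: "\<forall>e\<in>B. \<exists>u\<in>C. \<exists>v\<in>D. e = {u, v}"
    and disj: "C \<inter> D = {}"
    and route: "\<forall>i\<in>C. pp A (pp B (\<pi> i)) = i"
    and closed: "\<forall>i\<in>C. \<pi> i \<in> C"
    and nofix: "\<forall>i\<in>C. \<pi> i \<noteq> i"
  shows "inj_on (pp A) C \<and> pp A ` C \<subseteq> D"
proof
  show "inj_on (pp A) C" by (metis inj_onI pp_invol[OF mA])
  show "pp A ` C \<subseteq> D"
  proof
    fix y assume "y \<in> pp A ` C"
    then obtain i where i: "i \<in> C" "y = pp A i" by blast
    define j where "j = pp B (\<pi> i)"
    have pi: "\<pi> i \<in> C" using closed i by blast
    have ji: "pp A j = i" using route i j_def by blast
    from pp_cross[OF mB cB disj pi] have "j = \<pi> i \<or> j \<in> D" unfolding j_def .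
    then show "y \<in> D"
    proof
      assume "j = \<pi> i"
      then have "pp A (\<pi> i) = i" using ji by simp
      moreover have "i \<noteq> \<pi> i" using nofix i by metis
      ultimately have "i \<in> D" using pp_cross[OF mA cA disj pi] by metis
      then show ?thesis using i disj by blast
    next
      assume jD: "j \<in> D"
      then have "j \<noteq> i" using i disj by blast
      have "pp A i = j" using ji pp_invol[OF mA, of j] by simp
      then show ?thesis using i jD by simp
    qed
  qed
qed

lemma run_steps_pp:
  assumes "length Ms \<le> 2" "\<forall>M\<in>set Ms. is_matching E M \<and> P M" "P {}"
  shows "\<exists>A B. is_matching E A \<and> P A \<and> is_matching E B \<and> P B \<and>
     (\<forall>v. run_steps Ms v = pp A (pp B v))"
proof -
  have me: "is_matching E {}" by (simp add: is_matching_def)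
  have "Ms = [] \<or> (\<exists>M. Ms = [M]) \<or> (\<exists>M1 M2. Ms = [M1,M2])"
    using assms(1) by (cases Ms; cases "tl Ms"; simp)
  then consider "Ms = []" | M where "Ms = [M]" | M1 M2 where "Ms = [M1, M2]"
    by blast
  then show ?thesis
  proof cases
    case 1 then show ?thesis using me assms(3)
      by (intro exI[of _ "{}"]) (simp add: run_steps_def pp_empty)
  next
    case (2 M)
    then have m: "is_matching E M" "P M" using assms(2) by auto
    show ?thesis using 2 m me assms(3)
      by (intro exI[of _ M] exI[of _ "{}"]) (simp add: run_steps_def pp_empty swap_step_pp)
  next
    case (3 M1 M2)
    then have m: "is_matching E M1" "P M1" "is_matching E M2" "P M2" using assms(2) by auto
    show ?thesis using 3 m
      by (intro exI[of _ M1] exI[of _ M2]) (simp add: run_steps_def swap_step_pp[OF m(3)] swap_step_pp[OF m(1)])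
  qed
qed

lemma cyc_funpow_in:
  assumes "\<pi> permutes {1..n}" "a \<in> {1..n}"
  shows "(\<pi> ^^ k) a \<in> {1..n}"
  using permutes_in_image[OF permutes_funpow[OF assms(1)]] assms(2) by blast

lemma cyc_sub:
  assumes "\<pi> permutes {1..n}" "a \<in> {1..n}"
  shows "cycle_of \<pi> a \<subseteq> {1..n}"
  using cyc_funpow_in[OF assms] unfolding cycle_of_def by blast

lemma cyc_self: "a \<in> cycle_of \<pi> a"
  unfolding cycle_of_def by (rule CollectI, rule exI[of _ 0]) simp

lemma cyc_closed:
  assumes "x \<in> cycle_of \<pi> a" shows "\<pi> x \<in> cycle_of \<pi> a"
proof -
  obtain k where "x = (\<pi> ^^ k) a" using assms unfolding cycle_of_def by blast
  then have "\<pi> x = (\<pi> ^^ Suc k) a" by simp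
  then show ?thesis unfolding cycle_of_def by blast
qed

lemma cyc_eq:
  assumes "\<pi> permutes {1..n}" "x \<in> cycle_of \<pi> a"
  shows "cycle_of \<pi> x = cycle_of \<pi> a"
proof -
  have "permutation \<pi>" using assms(1) permutes_imp_permutation by blast
  then obtain N where N: "(\<pi> ^^ N) = id" "N > 0" using permutation_is_nilpotent by blast
  obtain k where k: "x = (\<pi> ^^ k) a" using assms(2) unfolding cycle_of_def by blast
  have idk: "\<pi> ^^ (N * k) = id" using N(1) funpow_mult[where f=\<pi> and m=N and n=k] by (metis id_funpow)
  have Nk: "N * k \<ge> k" using N(2) by simp
  have ax: "(\<pi> ^^ (N * k - k)) x = a"
  proof -
    have "(\<pi> ^^ (N * k - k)) x = (\<pi> ^^ (N * k - k + k)) a" using k by (simp add: funpow_add)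
    also have "N * k - k + k = N * k" using Nk by simp
    finally show ?thesis using idk by simp
  qed
  show ?thesis
  proof
    show "cycle_of \<pi> x \<subseteq> cycle_of \<pi> a"
    proof
      fix y assume "y \<in> cycle_of \<pi> x"
      then obtain m where "y = (\<pi> ^^ m) x" unfolding cycle_of_def by blast
      then have "y = (\<pi> ^^ (m + k)) a" using k by (simp add: funpow_add)
      then show "y \<in> cycle_of \<pi> a" unfolding cycle_of_def by blast
    qed
  next
    show "cycle_of \<pi> a \<subseteq> cycle_of \<pi> x"
    proof
      fix y assume "y \<in> cycle_of \<pi> a"
      then obtain m where "y = (\<pi> ^^ m) a" unfolding cycle_of_def by blast
      then have "y = (\<pi> ^^ (m + (N * k - k))) x" using ax by (simp add: funpow_add)
      then show "y \<in> cycle_of \<pi> x" unfolding cycle_of_def by blast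
    qed
  qed
qed

lemma cyc_fix:
  assumes "\<pi> i = i" shows "cycle_of \<pi> i = {i}"
proof -
  have "(\<pi> ^^ m) i = i" for m by (induction m) (simp_all add: assms)
  then show ?thesis unfolding cycle_of_def by auto
qed

lemma cyc_facts:
  assumes "\<pi> permutes {1..n}" "C \<in> perm_cycles n \<pi>"
  shows "finite C \<and> C \<noteq> {} \<and> (\<forall>i\<in>C. \<pi> i \<in> C) \<and> (\<forall>i\<in>C. \<pi> i = i \<longrightarrow> C = {i})
     \<and> (\<forall>x\<in>C. \<exists>a. C = cycle_of \<pi> a \<and> cycle_of \<pi> x = C)"
proof -
  obtain a where a: "a \<in> {1..n}" "C = cycle_of \<pi> a" using assms(2) unfolding perm_cycles_def by blast
  have "finite C" using cyc_sub[OF assms(1) a(1)] a(2) finite_subset by blast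
  moreover have "C \<noteq> {}" using cyc_self a(2) by blast
  moreover have "\<forall>i\<in>C. \<pi> i \<in> C" using cyc_closed a(2) by blast
  moreover have "\<forall>i\<in>C. \<pi> i = i \<longrightarrow> C = {i}" using cyc_fix cyc_eq[OF assms(1)] a(2) by metis
  moreover have "\<forall>x\<in>C. \<exists>a. C = cycle_of \<pi> a \<and> cycle_of \<pi> x = C" using cyc_eq[OF assms(1)] a(2) by blast
  ultimately show ?thesis by blast
qed

lemma half:
  assumes mA: "is_matching E A" and mB: "is_matching E B"
    and cA: "\<forall>e\<in>A. \<exists>u\<in>C. \<exists>v\<in>D. e = {u, v}"
    and cB: "\<forall>e\<in>B. \<exists>u\<in>C. \<exists>v\<in>D. e = {u, v}"
    and disj: "C \<inter> D = {}"
    and route: "\<forall>i\<in>C. pp A (pp B (\<pi> i)) = i"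
    and closed: "\<forall>i\<in>C. \<pi> i \<in> C"
    and nofix: "\<forall>i\<in>C. \<pi> i \<noteq> i"
    and fin: "finite D"
  shows "card C \<le> card D"
  using core[OF mA mB cA cB disj route closed nofix] card_inj_on_le fin by blast

lemma swapc: "\<forall>e\<in>A. \<exists>u\<in>C. \<exists>v\<in>D. e = {u, v} \<Longrightarrow> \<forall>e\<in>A. \<exists>u\<in>D. \<exists>v\<in>C. e = {u, v}"
  by (metis insert_commute)

theorem lemma1:
  fixes n :: nat and E :: "nat \<Rightarrow> nat \<Rightarrow> bool" and \<pi> :: "nat \<Rightarrow> nat"
    and C1 C2 :: "nat set"
  assumes "simple_graph_on n E"
    and "connected_graph_on n E"
    and "\<pi> permutes {1..n}"
    and "C1 \<in> perm_cycles n \<pi>" and "C2 \<in> perm_cycles n \<pi>"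
    and "C1 \<noteq> C2"
    and "mutually_routable_2 E \<pi> C1 C2"
  shows "card C1 = card C2"
proof -
  note f1 = cyc_facts[OF assms(3) assms(4)]
  note f2 = cyc_facts[OF assms(3) assms(5)]
  have disj: "C1 \<inter> C2 = {}"
  proof (rule ccontr)
    assume "C1 \<inter> C2 \<noteq> {}"
    then obtain x where "x \<in> C1" "x \<in> C2" by blast
    moreover have "\<forall>x\<in>C1. \<exists>a. C1 = cycle_of \<pi> a \<and> cycle_of \<pi> x = C1" using f1 by (rule conjunct2[THEN conjunct2, THEN conjunct2, THEN conjunct2])
    moreover have "\<forall>x\<in>C2. \<exists>a. C2 = cycle_of \<pi> a \<and> cycle_of \<pi> x = C2" using f2 by (rule conjunct2[THEN conjunct2, THEN conjunct2, THEN conjunct2])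
    ultimately have "cycle_of \<pi> x = C1" "cycle_of \<pi> x = C2" by blast+
    then show False using assms(6) by simp
  qed
  obtain Ms where Ms: "length Ms \<le> 2"
    "\<forall>M\<in>set Ms. is_matching E M \<and> (\<forall>e\<in>M. \<exists>u\<in>C1. \<exists>v\<in>C2. e = {u, v})"
    "\<forall>i\<in>C1 \<union> C2. run_steps Ms (\<pi> i) = i"
    using assms(7) unfolding mutually_routable_2_def by blast
  obtain A B where AB: "is_matching E A" "\<forall>e\<in>A. \<exists>u\<in>C1. \<exists>v\<in>C2. e = {u, v}"
    "is_matching E B" "\<forall>e\<in>B. \<exists>u\<in>C1. \<exists>v\<in>C2. e = {u, v}"
    "\<forall>v. run_steps Ms v = pp A (pp B v)"
    using run_steps_pp[OF Ms(1) Ms(2)] by auto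
  have r1: "\<forall>i\<in>C1. pp A (pp B (\<pi> i)) = i" using Ms(3) AB(5) by auto
  have r2: "\<forall>i\<in>C2. pp A (pp B (\<pi> i)) = i" using Ms(3) AB(5) by auto
  have disj2: "C2 \<inter> C1 = {}" using disj by blast
  have cl1: "\<forall>i\<in>C1. \<pi> i \<in> C1" using conjunct1[OF conjunct2[OF conjunct2[OF f1]]] .
  have cl2: "\<forall>i\<in>C2. \<pi> i \<in> C2" using conjunct1[OF conjunct2[OF conjunct2[OF f2]]] .
  have le12: "card C1 \<le> card C2" if "\<forall>i\<in>C1. \<pi> i \<noteq> i"
    using half[OF AB(1) AB(3) AB(2) AB(4) disj r1 cl1 that] f2 by blast
  have le21: "card C2 \<le> card C1" if "\<forall>i\<in>C2. \<pi> i \<noteq> i"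
    using half[OF AB(1) AB(3) swapc[OF AB(2)] swapc[OF AB(4)] disj2 r2 cl2 that] f1 by blast
  have c1: "card C1 \<ge> 1" using f1 card_0_eq by fastforce
  have c2: "card C2 \<ge> 1" using f2 card_0_eq by fastforce
  have s1: "card C1 = 1" if "\<exists>i\<in>C1. \<pi> i = i" using that f1 by fastforce
  have s2: "card C2 = 1" if "\<exists>i\<in>C2. \<pi> i = i" using that f2 by fastforce
  show ?thesis
  proof (cases "\<exists>i\<in>C1. \<pi> i = i"; cases "\<exists>i\<in>C2. \<pi> i = i")
    assume "\<exists>i\<in>C1. \<pi> i = i" "\<exists>i\<in>C2. \<pi> i = i" then show ?thesis using s1 s2 by simp
  next
    assume "\<exists>i\<in>C1. \<pi> i = i" "\<not> (\<exists>i\<in>C2. \<pi> i = i)" then show ?thesis using s1 le21 c2 by fastforce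
  next
    assume "\<not> (\<exists>i\<in>C1. \<pi> i = i)" "\<exists>i\<in>C2. \<pi> i = i" then show ?thesis using s2 le12 c1 by fastforce
  next
    assume "\<not> (\<exists>i\<in>C1. \<pi> i = i)" "\<not> (\<exists>i\<in>C2. \<pi> i = i)" then show ?thesis using le12 le21 by fastforce
  qed
qed

end
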